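(* For all $\eta>0$, $\alpha>0$ and $M>0$ there exists $\varepsilon>0$ such that: if $S\in\mathcal A(M,\varepsilon,\alpha)$ and $C_S$ is a minimal set of some $C^1$ diffeomorphism $f:S^1\to S^1$, then there exists $m_0=m_0(f)\in\mathbb N$ such that for every $m$-block $T$ of $C_S$ with $m>m_0$ one has $\mathcal N(g_T)<\eta$.
   Context: Setting: $k\ge2$; $I_1,\dots,I_k$ pairwise disjoint compact intervals in $[0,1)$ ordered left to right; $L\subset[0,1)$ compact interval containing $I=I_1\cup\dots\cup I_k$; $S^1=\mathbb R/\mathbb Z\cong[0,1)$. $\mathcal S^{r}(I_1,\dots,I_k,L)$: $C^r$ maps $S:I\to L$ with $S(I_j)=L$ for all $j$ and $|S'|>1$; $C_S=\{x\in I:S^n(x)\in I\ \forall n\ge1\}$. For a $C^1$ map $F$ with nonvanishing derivative on an interval $T$, $\mathcal N(F)=\sup_{x,y\in T}\log\frac{|F'(x)|}{|F'(y)|}$; for $S$ one sets $\mathcal N(S)=\max_j\sup_{x,y\in I_j}\log\frac{|S'(x)|}{|S'(y)|}$. $\mathcal A(M,\varepsilon,\alpha)$ is the set of $S\in\mathcal S^{1+\alpha}(I_1,\dots,I_k,L)$ with $\mathcal N(S)<\varepsilon$ and $|\log\frac{|S'(x)|}{|S'(y)|}|\le M|x-y|^\alpha$ for $x,y$ in a common $I_j$. Inverse branches $\phi_i=(S|_{I_i})^{-1}$, $\phi(i_1,\dots,i_m)=\phi_{i_1}\circ\dots\circ\phi_{i_m}$; $\phi(i_1,\dots,i_m)(L)$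 is an $m$-block. $J_i$ ($1\le i\le k-1$) is the open interval between $I_i$ and $I_{i+1}$; the intervals $\phi(i_1,\dots,i_r)(J_i)$ are the gaps of level $r$. A minimal set of $f$ is a nonempty closed invariant set in which every orbit is dense. For such $f$ and an $m$-block $T$, $u_T=\max\{n\in\mathbb N: S^{n-1}(f(T))\subset I\}$ (equivalently, the least $n$ such that $S^n$ maps $f(J)$ onto some $J_j$ for some gap $J\subset T$), and $g_T=S^{u_T}\circ f|_T$. *)

theory Defs
  imports "HOL-Analysis.Analysis"
begin

text \<open>Standing setting: k \<ge> 2 pairwise disjoint compact intervals
  I_j = {a j..b j} (j < k, indexed from 0), ordered left to right inside [0,1),
  and a compact interval L = {l1..l2} \<subseteq> [0,1) containing their union.\<close>

definition repeller_setting :: "nat \<Rightarrow> (nat \<Rightarrow> real) \<Rightarrow> (nat \<Rightarrow> real) \<Rightarrow> real \<Rightarrow> real \<Rightarrow> bool" where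
  "repeller_setting k a b l1 l2 \<longleftrightarrow>
     2 \<le> k \<and> 0 \<le> a 0 \<and> (\<forall>j<k. a j < b j) \<and> (\<forall>j. Suc j < k \<longrightarrow> b j < a (Suc j)) \<and>
     b (k - 1) < 1 \<and> 0 \<le> l1 \<and> l1 \<le> a 0 \<and> b (k - 1) \<le> l2 \<and> l2 < 1"

definition Iset :: "nat \<Rightarrow> (nat \<Rightarrow> real) \<Rightarrow> (nat \<Rightarrow> real) \<Rightarrow> real set" where
  "Iset k a b = (\<Union>j<k. {a j..b j})"

text \<open>S \<in> S^{1+alpha}(I_1,...,I_k,L); S' is the (one-sided at endpoints) derivative of S on each I_j.\<close>
definition in_class_S :: "nat \<Rightarrow> (nat \<Rightarrow> real) \<Rightarrow> (nat \<Rightarrow> real) \<Rightarrow> real \<Rightarrow> real \<Rightarrow> real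
    \<Rightarrow> (real \<Rightarrow> real) \<Rightarrow> (real \<Rightarrow> real) \<Rightarrow> bool" where
  "in_class_S k a b l1 l2 \<alpha> S S' \<longleftrightarrow>
     (\<forall>j<k. S ` {a j..b j} = {l1..l2}) \<and>
     (\<forall>j<k. \<forall>x\<in>{a j..b j}. (S has_real_derivative S' x) (at x within {a j..b j}) \<and> \<bar>S' x\<bar> > 1) \<and>
     (\<exists>H. \<forall>j<k. \<forall>x\<in>{a j..b j}. \<forall>y\<in>{a j..b j}. \<bar>S' x - S' y\<bar> \<le> H * \<bar>x - y\<bar> powr \<alpha>)"

text \<open>Nonlinearity N(F) on T, given the derivative F' of F on T.\<close>
definition nonlin :: "(real \<Rightarrow> real) \<Rightarrow> real set \<Rightarrow> real" where
  "nonlin F' T = (SUP p\<in>T \<times> T. ln (\<bar>F' (fst p)\<bar> / \<bar>F' (snd p)\<bar>))"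

definition nonlin_S :: "nat \<Rightarrow> (nat \<Rightarrow> real) \<Rightarrow> (nat \<Rightarrow> real) \<Rightarrow> (real \<Rightarrow> real) \<Rightarrow> real" where
  "nonlin_S k a b S' = Max ((\<lambda>j. nonlin S' {a j..b j}) ` {..<k})"

definition class_A :: "nat \<Rightarrow> (nat \<Rightarrow> real) \<Rightarrow> (nat \<Rightarrow> real) \<Rightarrow> real \<Rightarrow> real \<Rightarrow> real \<Rightarrow> real \<Rightarrow> real
    \<Rightarrow> (real \<Rightarrow> real) \<Rightarrow> (real \<Rightarrow> real) \<Rightarrow> bool" where
  "class_A k a b l1 l2 M \<epsilon> \<alpha> S S' \<longleftrightarrow>
     in_class_S k a b l1 l2 \<alpha> S S' \<and> nonlin_S k a b S' < \<epsilon> \<and>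
     (\<forall>j<k. \<forall>x\<in>{a j..b j}. \<forall>y\<in>{a j..b j}. \<bar>ln (\<bar>S' x\<bar> / \<bar>S' y\<bar>)\<bar> \<le> M * \<bar>x - y\<bar> powr \<alpha>)"

definition survivor_set :: "nat \<Rightarrow> (nat \<Rightarrow> real) \<Rightarrow> (nat \<Rightarrow> real) \<Rightarrow> (real \<Rightarrow> real) \<Rightarrow> real set" where
  "survivor_set k a b S = {x \<in> Iset k a b. \<forall>n\<ge>1. (S ^^ n) x \<in> Iset k a b}"

text \<open>Circle S^1 = R/Z identified with [0,1); a circle map is given via a lift F.\<close>
definition circle_map :: "(real \<Rightarrow> real) \<Rightarrow> real \<Rightarrow> real" where
  "circle_map F x = frac (F x)"

definition C1_circle_diffeo_lift :: "(real \<Rightarrow> real) \<Rightarrow> bool" where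
  "C1_circle_diffeo_lift F \<longleftrightarrow>
     (\<exists>F'. (\<forall>x. (F has_real_derivative F' x) (at x)) \<and> continuous_on UNIV F' \<and> (\<forall>x. F' x \<noteq> 0)) \<and>
     ((\<forall>x. F (x + 1) = F x + 1) \<or> (\<forall>x. F (x + 1) = F x - 1))"

definition is_minimal_set :: "(real \<Rightarrow> real) \<Rightarrow> real set \<Rightarrow> bool" where
  "is_minimal_set f C \<longleftrightarrow> C \<noteq> {} \<and> closed C \<and> f ` C = C \<and>
     (\<forall>x\<in>C. C \<subseteq> closure {(f ^^ n) x | n. True})"

text \<open>m-blocks phi(i_1,...,i_m)(L), phi_i the inverse branch of S on I_i.\<close>
definition is_block :: "nat \<Rightarrow> (nat \<Rightarrow> real) \<Rightarrow> (nat \<Rightarrow> real) \<Rightarrow> real \<Rightarrow> real \<Rightarrow> (real \<Rightarrow> real)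
    \<Rightarrow> nat \<Rightarrow> real set \<Rightarrow> bool" where
  "is_block k a b l1 l2 S m T \<longleftrightarrow>
     (\<exists>is. length is = m \<and> set is \<subseteq> {..<k} \<and>
        T = foldr (\<lambda>i A. the_inv_into {a i..b i} S ` A) is {l1..l2})"

text \<open>n is admissible for u_T: S^{n-1}(f(T)) is defined and contained in I.\<close>
definition return_ok :: "nat \<Rightarrow> (nat \<Rightarrow> real) \<Rightarrow> (nat \<Rightarrow> real) \<Rightarrow> (real \<Rightarrow> real) \<Rightarrow> (real \<Rightarrow> real)
    \<Rightarrow> real set \<Rightarrow> nat \<Rightarrow> bool" where
  "return_ok k a b S f T n \<longleftrightarrow> 1 \<le> n \<and> (\<forall>i<n. (S ^^ i) ` (f ` T) \<subseteq> Iset k a b)"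

end

theory Submission
  imports Defs
begin


lemma chain_lt:
  assumes R: "repeller_setting k a b l1 l2" and "i < j" "j < k"
  shows "b i < a j"
  using assms(2,3)
proof (induction j)
  case 0 then show ?case by simp
next
  case (Suc j)
  have s: "b j < a (Suc j)" using R Suc.prems unfolding repeller_setting_def by auto
  show ?case
  proof (cases "i = j")
    case True then show ?thesis using s by simp
  next
    case False
    then have "b i < a j" using Suc by auto
    moreover have "a j < b j" using R Suc.prems unfolding repeller_setting_def by auto
    ultimately show ?thesis using s by linarith
  qed
qed

lemma a_mono:
  assumes R: "repeller_setting k a b l1 l2" and "i \<le> j" "j < k"
  shows "a i \<le> a j"
proof (cases "i = j")
  case False
  then have "b i < a j" using chain_lt[OF R] assms by auto
  moreover have "a i < b i" using R assms unfolding repeller_setting_def by auto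
  ultimately show ?thesis by linarith
qed simp

lemma b_mono:
  assumes R: "repeller_setting k a b l1 l2" and "i \<le> j" "j < k"
  shows "b i \<le> b j"
proof (cases "i = j")
  case False
  then have "b i < a j" using chain_lt[OF R] assms by auto
  moreover have "a j < b j" using R assms unfolding repeller_setting_def by auto
  ultimately show ?thesis by linarith
qed simp

lemma I_in_L:
  assumes R: "repeller_setting k a b l1 l2" and "j < k"
  shows "l1 \<le> a j" "b j \<le> l2" "a j < b j"
proof -
  have "a 0 \<le> a j" using a_mono[OF R, of 0 j] assms by auto
  then show "l1 \<le> a j" using R unfolding repeller_setting_def by auto
  have "b j \<le> b (k-1)" using b_mono[OF R, of j "k-1"] assms by auto
  then show "b j \<le> l2" using R unfolding repeller_setting_def by auto
  show "a j < b j" using R assms unfolding repeller_setting_def by auto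
qed

lemma Iset_sub:
  assumes R: "repeller_setting k a b l1 l2" and "x \<in> Iset k a b"
  shows "l1 \<le> x" "x \<le> l2" "0 \<le> x" "x \<le> b (k-1)" 
proof -
  obtain j where j: "j < k" "a j \<le> x" "x \<le> b j" using assms(2) unfolding Iset_def by auto
  show "l1 \<le> x" "x \<le> l2" using I_in_L[OF R j(1)] j by auto
  then show "0 \<le> x" using R unfolding repeller_setting_def by auto
  have "b j \<le> b (k-1)" using b_mono[OF R, of j "k-1"] j by auto
  then show "x \<le> b (k-1)" using j by auto
qed

lemma conn_one:
  assumes R: "repeller_setting k a b l1 l2" and C: "connected C" "C \<subseteq> Iset k a b" "C \<noteq> {}"
  shows "\<exists>j<k. C \<subseteq> {a j..b j}"
proof -
  obtain z where z: "z \<in> C" using C by auto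
  then have "z \<in> Iset k a b" using C by auto
  then obtain j where j: "j < k" "a j \<le> z" "z \<le> b j" unfolding Iset_def by auto
  have "w \<in> {a j..b j}" if w: "w \<in> C" for w
  proof (rule ccontr)
    assume nw: "w \<notin> {a j..b j}"
    obtain j' where j': "j' < k" "a j' \<le> w" "w \<le> b j'" using subsetD[OF C(2) w] unfolding Iset_def by auto
    have "j' \<noteq> j" using nw j' by auto
    then consider "j < j'" | "j' < j" by linarith
    then show False
    proof cases
      case 1
      define g where "g = (b j + a (Suc j)) / 2"
      have lt: "b j < a (Suc j)" using chain_lt[OF R, of j "Suc j"] 1 j' by auto
      have "a (Suc j) \<le> a j'" using a_mono[OF R, of "Suc j" j'] 1 j' by auto
      then have "z \<le> g" "g \<le> w" using lt j j' unfolding g_def by auto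
      then have "g \<in> C" using C(1) z w unfolding connected_iff_interval by blast
      then have "g \<in> Iset k a b" using C(2) by blast
      then obtain i where i: "i < k" "a i \<le> g" "g \<le> b i" unfolding Iset_def by auto
      show False
      proof (cases "i \<le> j")
        case True
        then have "b i \<le> b j" using b_mono[OF R] j by auto
        then show False using i lt unfolding g_def by auto
      next
        case False
        then have "a (Suc j) \<le> a i" using a_mono[OF R] i by auto
        then show False using i lt unfolding g_def by auto
      qed
    next
      case 2
      define g where "g = (b j' + a (Suc j')) / 2"
      have lt: "b j' < a (Suc j')" using chain_lt[OF R, of j' "Suc j'"] 2 j by auto
      have "a (Suc j') \<le> a j" using a_mono[OF R, of "Suc j'" j] 2 j by auto
      then have "w \<le> g" "g \<le> z" using lt j j' unfolding g_def by auto
      then have "g \<in> C" using C(1) z w unfolding connected_iff_interval by blast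
      then have "g \<in> Iset k a b" using C(2) by blast
      then obtain i where i: "i < k" "a i \<le> g" "g \<le> b i" unfolding Iset_def by auto
      show False
      proof (cases "i \<le> j'")
        case True
        then have "b i \<le> b j'" using b_mono[OF R] j' by auto
        then show False using i lt unfolding g_def by auto
      next
        case False
        then have "a (Suc j') \<le> a i" using a_mono[OF R] i j by auto
        then show False using i lt unfolding g_def by auto
      qed
    qed
  qed
  then show ?thesis using j by auto
qed



lemma mvt_branch:
  assumes D: "\<forall>x\<in>{p..q}. (S has_real_derivative S' x) (at x within {p..q})"
    and "p \<le> x" "x \<le> y" "y \<le> q"
  shows "\<exists>z\<in>{p..q}. S y - S x = (y - x) * S' z"
proof -
  have "\<exists>z\<in>{x..y}. S y - S x = (\<lambda>z. (*) (S' z)) z (y - x)"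
  proof (rule mvt_very_simple)
    show "x \<le> y" by fact
    fix z assume "x \<le> z" "z \<le> y"
    then have "(S has_real_derivative S' z) (at z within {p..q})" using D assms by auto
    then have "(S has_real_derivative S' z) (at z within {x..y})"
      by (rule has_field_derivative_subset) (use assms in auto)
    then show "(S has_derivative (*) (S' z)) (at z within {x..y})"
      by (simp add: has_field_derivative_def)
  qed
  then obtain z where "z \<in> {x..y}" "S y - S x = S' z * (y - x)" by auto
  then show ?thesis using assms by (intro bexI[of _ z]) (auto simp: mult.commute)
qed

lemma expand_branch:
  assumes D: "\<forall>x\<in>{p..q}. (S has_real_derivative S' x) (at x within {p..q})"
    and L: "\<forall>z\<in>{p..q}. lam \<le> \<bar>S' z\<bar>" and "lam \<ge> 0"
    and x: "x \<in> {p..q}" and y: "y \<in> {p..q}"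
  shows "lam * \<bar>x - y\<bar> \<le> \<bar>S x - S y\<bar>"
proof -
  have main: "lam * \<bar>x - y\<bar> \<le> \<bar>S x - S y\<bar>" if xy: "x \<in> {p..q}" "y \<in> {p..q}" "x \<le> y" for x y
  proof -
    obtain z where z: "z \<in> {p..q}" "S y - S x = (y - x) * S' z"
      using mvt_branch[OF D, of x y] xy by auto
    have "lam * \<bar>x - y\<bar> \<le> \<bar>y - x\<bar> * \<bar>S' z\<bar>"
      using L z(1) by (simp add: abs_minus_commute mult.commute mult_right_mono)
    also have "\<dots> = \<bar>S x - S y\<bar>" using z(2) by (metis abs_minus_commute abs_mult)
    finally show ?thesis .
  qed
  show ?thesis
  proof (cases "x \<le> y")
    case True then show ?thesis using main x y by auto
  next
    case False then show ?thesis using main[of y x] x y by (auto simp: abs_minus_commute)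
  qed
qed

lemma nonlin_bound:
  assumes A: "class_A k a b l1 l2 M \<epsilon> \<alpha> S S'" and j: "j < k"
    and x: "x \<in> {a j..b j}" and y: "y \<in> {a j..b j}" and Mpos: "M \<ge> 0" and apos: "\<alpha> \<ge> 0"
  shows "ln (\<bar>S' x\<bar> / \<bar>S' y\<bar>) < \<epsilon>"
proof -
  let ?f = "\<lambda>p. ln (\<bar>S' (fst p)\<bar> / \<bar>S' (snd p)\<bar>)"
  have H: "\<forall>x\<in>{a j..b j}. \<forall>y\<in>{a j..b j}. \<bar>ln (\<bar>S' x\<bar> / \<bar>S' y\<bar>)\<bar> \<le> M * \<bar>x - y\<bar> powr \<alpha>"
    using A j unfolding class_A_def by auto
  have bd: "bdd_above (?f ` ({a j..b j} \<times> {a j..b j}))"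
  proof (rule bdd_aboveI2)
    fix p assume p: "p \<in> {a j..b j} \<times> {a j..b j}"
    obtain u v where uv: "p = (u,v)" "u \<in> {a j..b j}" "v \<in> {a j..b j}" using p by auto
    have "?f p \<le> M * \<bar>fst p - snd p\<bar> powr \<alpha>" using H uv by (simp add: abs_le_iff)
    also have "\<dots> \<le> M * (b j - a j) powr \<alpha>"
      using p Mpos apos by (intro mult_left_mono powr_mono2) auto
    finally show "?f p \<le> M * (b j - a j) powr \<alpha>" .
  qed
  have "ln (\<bar>S' x\<bar> / \<bar>S' y\<bar>) \<le> nonlin S' {a j..b j}"
    unfolding nonlin_def using cSUP_upper[OF _ bd, of "(x,y)"] x y by auto
  also have "\<dots> \<le> nonlin_S k a b S'"
    unfolding nonlin_S_def using j by (intro Max_ge) auto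
  also have "\<dots> < \<epsilon>" using A unfolding class_A_def by auto
  finally show ?thesis .
qed



lemma mvt_abs:
  assumes D: "\<forall>x\<in>{p..q}. (S has_real_derivative S' x) (at x within {p..q})"
    and x: "x \<in> {p..q}" and y: "y \<in> {p..q}"
  shows "\<exists>z\<in>{p..q}. \<bar>S y - S x\<bar> = \<bar>y - x\<bar> * \<bar>S' z\<bar>"
proof (cases "x \<le> y")
  case True
  then obtain z where "z \<in> {p..q}" "S y - S x = (y - x) * S' z" using mvt_branch[OF D, of x y] x y by auto
  then show ?thesis by (metis abs_mult)
next
  case False
  then obtain z where "z \<in> {p..q}" "S x - S y = (x - y) * S' z" using mvt_branch[OF D, of y x] x y by auto
  then show ?thesis by (metis abs_mult abs_minus_commute)
qed

lemma deriv_lower: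
  assumes R: "repeller_setting k a b l1 l2" and A: "class_A k a b l1 l2 M \<epsilon> \<alpha> S S'"
    and Mpos: "M \<ge> 0" and apos: "\<alpha> \<ge> 0" and j: "j < k"
    and l0: "lam0 \<le> (l2 - l1) / (b j - a j)" "lam0 > 0" and e: "\<epsilon> \<le> ln lam0 / 2"
    and z: "z \<in> {a j..b j}"
  shows "sqrt lam0 \<le> \<bar>S' z\<bar>"
proof -
  have IS: "in_class_S k a b l1 l2 \<alpha> S S'" using A unfolding class_A_def by auto
  have D: "\<forall>x\<in>{a j..b j}. (S has_real_derivative S' x) (at x within {a j..b j})"
    and D1: "\<forall>x\<in>{a j..b j}. \<bar>S' x\<bar> > 1"
    and Im: "S ` {a j..b j} = {l1..l2}" using IS j unfolding in_class_S_def by auto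
  have ab: "l1 \<le> a j" "b j \<le> l2" "a j < b j" using I_in_L[OF R j] by auto
  have "l1 \<in> S ` {a j..b j}" "l2 \<in> S ` {a j..b j}" using Im ab by auto
  then obtain p q where p: "p \<in> {a j..b j}" "S p = l1" and q: "q \<in> {a j..b j}" "S q = l2" by (auto simp del: atLeastAtMost_iff)
  obtain \<xi> where xi: "\<xi> \<in> {a j..b j}" "\<bar>S q - S p\<bar> = \<bar>q - p\<bar> * \<bar>S' \<xi>\<bar>" using mvt_abs[OF D p(1) q(1)] by auto
  have "l2 - l1 \<le> (b j - a j) * \<bar>S' \<xi>\<bar>"
  proof -
    have "l2 - l1 = \<bar>q - p\<bar> * \<bar>S' \<xi>\<bar>" using xi p q ab by auto
    also have "\<dots> \<le> (b j - a j) * \<bar>S' \<xi>\<bar>" using p q by (intro mult_right_mono) auto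
    finally show ?thesis .
  qed
  then have "(l2 - l1) / (b j - a j) \<le> \<bar>S' \<xi>\<bar>" using ab by (simp add: pos_divide_le_eq mult.commute)
  then have xi_ge: "lam0 \<le> \<bar>S' \<xi>\<bar>" using l0 by linarith
  have pz: "\<bar>S' z\<bar> > 0" "\<bar>S' \<xi>\<bar> > 0" using D1 z xi by fastforce+
  have "ln (\<bar>S' \<xi>\<bar> / \<bar>S' z\<bar>) < \<epsilon>" by (rule nonlin_bound[OF A j xi(1) z Mpos apos])
  also have "\<epsilon> \<le> ln lam0 / 2" by (rule e)
  also have "ln lam0 / 2 = ln (sqrt lam0)" using l0 by (simp add: ln_sqrt)
  finally have "ln (\<bar>S' \<xi>\<bar> / \<bar>S' z\<bar>) < ln (sqrt lam0)" .
  then have "\<bar>S' \<xi>\<bar> / \<bar>S' z\<bar> < sqrt lam0" using pz l0 by (simp add: ln_less_cancel_iff)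
  then have "\<bar>S' \<xi>\<bar> < sqrt lam0 * \<bar>S' z\<bar>" using pz by (simp add: divide_less_eq)
  then have "lam0 < sqrt lam0 * \<bar>S' z\<bar>" using xi_ge by linarith
  moreover have sq: "lam0 = sqrt lam0 * sqrt lam0" using l0 by simp
  show ?thesis
  proof (rule ccontr)
    assume "\<not> sqrt lam0 \<le> \<bar>S' z\<bar>"
    then have "sqrt lam0 * \<bar>S' z\<bar> \<le> sqrt lam0 * sqrt lam0" using l0 by (intro mult_left_mono) auto
    then show False using calculation sq by linarith
  qed
qed



lemma block_props:
  assumes R: "repeller_setting k a b l1 l2"
    and D: "\<forall>j<k. \<forall>x\<in>{a j..b j}. (S has_real_derivative S' x) (at x within {a j..b j})"
    and Im: "\<forall>j<k. S ` {a j..b j} = {l1..l2}"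
    and lam: "lam > 1"
    and Ex: "\<forall>j<k. \<forall>x\<in>{a j..b j}. \<forall>y\<in>{a j..b j}. lam * \<bar>x - y\<bar> \<le> \<bar>S x - S y\<bar>"
    and js: "set js \<subseteq> {..<k}"
  shows "foldr (\<lambda>i A. the_inv_into {a i..b i} S ` A) js {l1..l2} \<subseteq> {l1..l2} \<and>
         foldr (\<lambda>i A. the_inv_into {a i..b i} S ` A) js {l1..l2} \<noteq> {} \<and>
         connected (foldr (\<lambda>i A. the_inv_into {a i..b i} S ` A) js {l1..l2}) \<and>
         (\<forall>x\<in>foldr (\<lambda>i A. the_inv_into {a i..b i} S ` A) js {l1..l2}.
          \<forall>y\<in>foldr (\<lambda>i A. the_inv_into {a i..b i} S ` A) js {l1..l2}.
            \<bar>x - y\<bar> * lam ^ length js \<le> l2 - l1)"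
  using js
proof (induction "js")
  case Nil
  have "l1 < l2" using I_in_L[of k a b l1 l2 0] R unfolding repeller_setting_def by force
  then show ?case by (auto simp: abs_le_iff)
next
  case (Cons i js)
  define A where "A = foldr (\<lambda>i A. the_inv_into {a i..b i} S ` A) js {l1..l2}"
  have i: "i < k" using Cons.prems by auto
  have IH: "A \<subseteq> {l1..l2}" "A \<noteq> {}" "connected A" "\<forall>x\<in>A. \<forall>y\<in>A. \<bar>x - y\<bar> * lam ^ length js \<le> l2 - l1"
    using Cons unfolding A_def by auto
  let ?g = "the_inv_into {a i..b i} S"
  have inj: "inj_on S {a i..b i}"
  proof (rule inj_onI)
    fix x y assume "x \<in> {a i..b i}" "y \<in> {a i..b i}" "S x = S y"
    then have "lam * \<bar>x - y\<bar> \<le> 0" using Ex i by (metis abs_zero diff_self)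
    then show "x = y" using lam by (simp add: mult_le_0_iff)
  qed
  have SL: "S ` {a i..b i} = {l1..l2}" using Im i by auto
  have gin: "?g p \<in> {a i..b i}" and Sg: "S (?g p) = p" if "p \<in> {l1..l2}" for p
    using the_inv_into_into[OF inj, of p "{a i..b i}"] f_the_inv_into_f[OF inj, of p] that SL by auto
  have cS: "continuous_on {a i..b i} S" using D i by (intro DERIV_continuous_on[where D=S']) auto
  have cg: "continuous_on {l1..l2} ?g"
    using continuous_on_inv[OF cS compact_Icc, of ?g] the_inv_into_f_f[OF inj] SL by auto
  have T: "foldr (\<lambda>i A. the_inv_into {a i..b i} S ` A) (i # js) {l1..l2} = ?g ` A"
    unfolding A_def by simp
  have sub: "?g ` A \<subseteq> {l1..l2}"
  proof
    fix x assume "x \<in> ?g ` A"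
    then obtain p where "p \<in> A" "x = ?g p" by auto
    then have "x \<in> {a i..b i}" using gin IH(1) by auto
    then show "x \<in> {l1..l2}" using I_in_L[OF R i] by auto
  qed
  have ne: "?g ` A \<noteq> {}" using IH by auto
  have con: "connected (?g ` A)"
    using connected_continuous_image[OF continuous_on_subset[OF cg IH(1)] IH(3)] .
  have dia: "\<bar>x - y\<bar> * lam ^ length (i # js) \<le> l2 - l1" if xy: "x \<in> ?g ` A" "y \<in> ?g ` A" for x y
  proof -
    obtain p q where pq: "p \<in> A" "q \<in> A" "x = ?g p" "y = ?g q" using xy by auto
    have "lam * \<bar>x - y\<bar> \<le> \<bar>S x - S y\<bar>" using Ex i pq gin IH(1) by blast
    also have "\<dots> = \<bar>p - q\<bar>"
    proof -
      have "p \<in> {l1..l2}" "q \<in> {l1..l2}" using pq IH(1) by auto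
      then show ?thesis using pq Sg[of p] Sg[of q] by simp
    qed
    finally have "lam * \<bar>x - y\<bar> * lam ^ length js \<le> \<bar>p - q\<bar> * lam ^ length js"
      using lam by (intro mult_right_mono) auto
    also have "\<dots> \<le> l2 - l1" using IH(4) pq by auto
    finally show ?thesis by (simp add: algebra_simps)
  qed
  show ?case unfolding T using sub ne con dia by blast
qed



lemma frac_const:
  assumes R: "repeller_setting k a b l1 l2" and T: "connected T"
    and cF: "continuous_on T F" and sub: "\<forall>y\<in>T. frac (F y) \<in> Iset k a b"
    and y1: "y1 \<in> T" and y2: "y2 \<in> T"
  shows "floor (F y1) = floor (F y2)"
proof -
  have main: False if z: "z1 \<in> T" "z2 \<in> T" "floor (F z1) < floor (F z2)" for z1 z2
  proof -
    define bb where "bb = b (k - 1)"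
    have bb: "bb < 1" using R unfolding repeller_setting_def bb_def by auto
    have "b 0 \<le> bb" using b_mono[OF R, of 0 "k-1"] R unfolding bb_def repeller_setting_def by auto
    then have bb0: "0 \<le> bb" using R unfolding repeller_setting_def by force
    define N where "N = floor (F z2)"
    define t where "t = real_of_int N - (1 - bb) / 2"
    have "frac (F z1) \<le> bb" using Iset_sub(4)[OF R] sub z unfolding bb_def by auto
    moreover have "F z1 = of_int (floor (F z1)) + frac (F z1)" by (simp add: frac_def)
    moreover have "real_of_int (floor (F z1)) \<le> real_of_int N - 1" using z unfolding N_def by linarith
    ultimately have "F z1 \<le> real_of_int N - 1 + bb" by linarith
    then have lt1: "F z1 \<le> t" unfolding t_def using bb by (simp add: field_simps)
    have "real_of_int N \<le> F z2" unfolding N_def by (rule of_int_floor_le)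
    then have lt2: "t \<le> F z2" unfolding t_def using bb by (simp add: field_simps)
    have "connected (F ` T)" by (rule connected_continuous_image[OF cF T])
    then have "t \<in> F ` T" using lt1 lt2 z unfolding connected_iff_interval by blast
    then obtain y where y: "y \<in> T" "F y = t" by auto
    have "frac t = 1 - (1 - bb) / 2"
      unfolding frac_unique_iff t_def using bb bb0 Iset_sub(3)[OF R, of "frac (F y)"] sub y
      by (auto simp: algebra_simps)
    then have "frac (F y) > bb" using y bb by (auto simp: field_simps)
    then show False using Iset_sub(4)[OF R] sub y unfolding bb_def by force
  qed
  show ?thesis using main[OF y1 y2] main[OF y2 y1] by (meson linorder_neqE)
qed

lemma geo_bound:
  fixes s :: real assumes "0 \<le> s" "s < 1"
  shows "(\<Sum>j<u. s ^ (u - 1 - j)) \<le> 1 / (1 - s)"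
proof -
  have "(\<Sum>j<u. s ^ (u - 1 - j)) = (\<Sum>j<u. s ^ (u - Suc j))" by simp
  also have "\<dots> = (\<Sum>j<u. s ^ j)" by (rule sum.nat_diff_reindex)
  also have "\<dots> = (1 - s ^ u) / (1 - s)" using assms by (simp add: sum_gp_strict)
  also have "\<dots> \<le> 1 / (1 - s)" using assms by (intro divide_right_mono) auto
  finally show ?thesis .
qed



lemma orbit_main:
  assumes R: "repeller_setting k a b l1 l2" and A: "class_A k a b l1 l2 M \<epsilon> \<alpha> S S'"
    and Mpos: "M > 0" and apos: "\<alpha> > 0" and epos: "\<epsilon> > 0"
    and lam: "lam > 1" and LB: "\<forall>j<k. \<forall>z\<in>{a j..b j}. lam \<le> \<bar>S' z\<bar>"
    and FD: "\<forall>x. (F has_real_derivative F' x) (at x)" and F0: "\<forall>x. F' x \<noteq> 0"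
    and T: "connected T" "T \<noteq> {}"
    and ret: "return_ok k a b S (circle_map F) T u"
    and Fbd: "\<forall>x\<in>T. \<forall>y\<in>T. ln \<bar>F' x\<bar> - ln \<bar>F' y\<bar> \<le> \<beta>"
  shows "\<exists>g'. (\<forall>x\<in>T. ((\<lambda>y. (S ^^ u) (circle_map F y)) has_real_derivative g' x) (at x within T)
                  \<and> g' x \<noteq> 0) \<and>
              nonlin g' T \<le> sqrt (\<epsilon> * M) / (1 - sqrt (lam powr (-\<alpha>))) + \<beta>"
proof -
  have IS: "in_class_S k a b l1 l2 \<alpha> S S'" using A unfolding class_A_def by auto
  have D: "\<forall>j<k. \<forall>x\<in>{a j..b j}. (S has_real_derivative S' x) (at x within {a j..b j})"
    and D1: "\<forall>j<k. \<forall>x\<in>{a j..b j}. \<bar>S' x\<bar> > 1"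
    using IS unfolding in_class_S_def by auto
  have Hol: "\<forall>j<k. \<forall>x\<in>{a j..b j}. \<forall>y\<in>{a j..b j}. \<bar>ln (\<bar>S' x\<bar> / \<bar>S' y\<bar>)\<bar> \<le> M * \<bar>x - y\<bar> powr \<alpha>"
    using A unfolding class_A_def by auto
  define f where "f = circle_map F"
  define h where "h i y = (S ^^ i) (f y)" for i y
  have u1: "1 \<le> u" using ret unfolding return_ok_def by auto
  have inI: "h i ` T \<subseteq> Iset k a b" if "i < u" for i
  proof -
    have "(S ^^ i) ` (f ` T) \<subseteq> Iset k a b" using ret that unfolding return_ok_def f_def by auto
    then show ?thesis unfolding h_def by (auto simp: image_image)
  qed
  have cF: "continuous_on T F"
    using FD by (intro continuous_at_imp_continuous_on) (auto intro: DERIV_isCont)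
  obtain x0 where x0: "x0 \<in> T" using T by auto
  define n where "n = floor (F x0)"
  have fT: "f y = F y - of_int n" if y: "y \<in> T" for y
  proof -
    have sub: "\<forall>y\<in>T. frac (F y) \<in> Iset k a b"
      using inI[of 0] u1 unfolding h_def f_def circle_map_def by auto
    have "floor (F y) = n" unfolding n_def by (rule frac_const[OF R T(1) cF sub y x0])
    then show ?thesis unfolding f_def circle_map_def frac_def by simp
  qed
  define Dv where "Dv i x = (\<Prod>j<i. S' (h j x)) * F' x" for i x
  have d0: "(h 0 has_real_derivative Dv 0 x) (at x within T)" if x: "x \<in> T" for x
  proof -
    have "((\<lambda>y. F y - of_int n) has_real_derivative F' x) (at x)"
      using FD by (auto intro!: derivative_eq_intros)
    then have "((\<lambda>y. F y - of_int n) has_real_derivative F' x) (at x within T)"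
      by (rule has_field_derivative_at_within)
    then have "(h 0 has_real_derivative F' x) (at x within T)"
      by (rule has_field_derivative_transform_within[where d=1]) (use x fT in \<open>auto simp: h_def\<close>)
    then show ?thesis by (simp add: Dv_def)
  qed
  have oneint: "\<exists>c<k. h i ` T \<subseteq> {a c..b c}"
    if iu: "i < u" and dd: "\<forall>x\<in>T. (h i has_real_derivative Dv i x) (at x within T)" for i
  proof -
    have "continuous_on T (h i)" using dd by (intro DERIV_continuous_on[where D="Dv i"]) auto
    then have "connected (h i ` T)" using T(1) by (rule connected_continuous_image)
    then show ?thesis using conn_one[OF R _ inI[OF iu]] T(2) by auto
  qed
  have hS: "h (Suc i) y = S (h i y)" for i y unfolding h_def by simp
  have key: "\<forall>x\<in>T. (h i has_real_derivative Dv i x) (at x within T)" if "i \<le> u" for i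
    using that
  proof (induction i)
    case 0 then show ?case using d0 by auto
  next
    case (Suc i)
    then have iu: "i < u" by auto
    have IH: "\<forall>x\<in>T. (h i has_real_derivative Dv i x) (at x within T)" using Suc by auto
    obtain c where c: "c < k" "h i ` T \<subseteq> {a c..b c}" using oneint[OF iu IH] by auto
    show ?case
    proof
      fix x assume x: "x \<in> T"
      have hx: "h i x \<in> {a c..b c}" using c x by auto
      have "(S has_real_derivative S' (h i x)) (at (h i x) within {a c..b c})" using D c hx by auto
      then have dS: "(S has_real_derivative S' (h i x)) (at (h i x) within (h i ` T))"
        by (rule has_field_derivative_subset) (use c in auto)
      have "((S \<circ> h i) has_real_derivative S' (h i x) * Dv i x) (at x within T)"
        by (rule DERIV_image_chain[OF dS]) (use IH x in auto)
      moreover have "S \<circ> h i = h (Suc i)" using hS by (auto simp: fun_eq_iff)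
      moreover have "S' (h i x) * Dv i x = Dv (Suc i) x" unfolding Dv_def by (simp add: ac_simps)
      ultimately show "(h (Suc i) has_real_derivative Dv (Suc i) x) (at x within T)" by simp
    qed
  qed
  have "\<forall>i\<in>{..<u}. \<exists>c. c < k \<and> h i ` T \<subseteq> {a c..b c}" using oneint key by auto
  then obtain c where c: "\<And>i. i < u \<Longrightarrow> c i < k \<and> h i ` T \<subseteq> {a (c i)..b (c i)}"
    using bchoice[of "{..<u}"] by (metis lessThan_iff)
  have hI: "h j x \<in> {a (c j)..b (c j)}" "c j < k" if "j < u" "x \<in> T" for j x
    using c[OF that(1)] that(2) by auto
  have S'pos: "\<bar>S' (h j x)\<bar> > 1" if "j < u" "x \<in> T" for j x
    using D1 hI[OF that] by auto
  have S'pos0: "\<bar>S' (h j x)\<bar> > 0" if "j < u" "x \<in> T" for j x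
    using S'pos[OF that] by linarith
  have absD: "\<bar>Dv u x\<bar> = (\<Prod>j<u. \<bar>S' (h j x)\<bar>) * \<bar>F' x\<bar>" for x
    unfolding Dv_def by (simp add: abs_mult abs_prod)
  have Dpos: "\<bar>Dv u x\<bar> > 0" if x: "x \<in> T" for x
  proof -
    have "(\<Prod>j<u. \<bar>S' (h j x)\<bar>) > 0" using S'pos0[OF _ x] by (intro prod_pos) auto
    then show ?thesis unfolding absD using F0 by simp
  qed
  have lnD: "ln \<bar>Dv u x\<bar> = (\<Sum>j<u. ln \<bar>S' (h j x)\<bar>) + ln \<bar>F' x\<bar>" if x: "x \<in> T" for x
  proof -
    have "(\<Prod>j<u. \<bar>S' (h j x)\<bar>) > 0" using S'pos0[OF _ x] by (intro prod_pos) auto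
    then have "ln \<bar>Dv u x\<bar> = ln (\<Prod>j<u. \<bar>S' (h j x)\<bar>) + ln \<bar>F' x\<bar>"
      unfolding absD using F0 by (simp add: ln_mult_pos)
    also have "ln (\<Prod>j<u. \<bar>S' (h j x)\<bar>) = (\<Sum>j<u. ln \<bar>S' (h j x)\<bar>)"
      using S'pos[OF _ x] by (intro ln_prod) fastforce+
    finally show ?thesis .
  qed
  have dist: "\<bar>h (u - 1 - m) x - h (u - 1 - m) y\<bar> * lam ^ m \<le> 1"
    if "m < u" "x \<in> T" "y \<in> T" for m x y
    using that(1)
  proof (induction m)
    case 0
    have "h (u - 1) x \<in> Iset k a b" "h (u - 1) y \<in> Iset k a b" using inI[of "u - 1"] u1 that by auto
    then have "0 \<le> h (u - 1) x" "h (u - 1) x \<le> b (k - 1)" "0 \<le> h (u - 1) y" "h (u - 1) y \<le> b (k - 1)"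
      using Iset_sub[OF R] by auto
    moreover have "b (k - 1) < 1" using R unfolding repeller_setting_def by auto
    ultimately show ?case by (simp add: abs_le_iff)
  next
    case (Suc m)
    define j where "j = u - 1 - Suc m"
    have j1: "u - 1 - m = Suc j" "j < u" using Suc.prems unfolding j_def by auto
    have IH: "\<bar>h (Suc j) x - h (Suc j) y\<bar> * lam ^ m \<le> 1" using Suc j1 by auto
    have cj: "c j < k" "h j x \<in> {a (c j)..b (c j)}" "h j y \<in> {a (c j)..b (c j)}"
      using hI[OF j1(2)] that(2,3) by auto
    have Dc: "\<forall>z\<in>{a (c j)..b (c j)}. (S has_real_derivative S' z) (at z within {a (c j)..b (c j)})"
      using D cj(1) by auto
    have Lc: "\<forall>z\<in>{a (c j)..b (c j)}. lam \<le> \<bar>S' z\<bar>" using LB cj(1) by auto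
    have "lam * \<bar>h j x - h j y\<bar> \<le> \<bar>S (h j x) - S (h j y)\<bar>"
      using expand_branch[OF Dc Lc _ cj(2,3)] lam by auto
    then have "lam * \<bar>h j x - h j y\<bar> * lam ^ m \<le> \<bar>h (Suc j) x - h (Suc j) y\<bar> * lam ^ m"
      using lam by (intro mult_right_mono) (auto simp: hS)
    then show ?case using IH unfolding j_def[symmetric] by (simp add: ac_simps)
  qed
  define q where "q = lam powr (-\<alpha>)"
  have q: "0 < q" "q < 1" unfolding q_def using lam apos by (auto intro: powr_less_one)
  have trm: "ln \<bar>S' (h j x)\<bar> - ln \<bar>S' (h j y)\<bar> \<le> sqrt (\<epsilon> * M) * sqrt q ^ (u - 1 - j)"
    if j: "j < u" and x: "x \<in> T" and y: "y \<in> T" for j x y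
  proof -
    define m where "m = u - 1 - j"
    have mj: "u - 1 - m = j" "m < u" using j unfolding m_def by auto
    define t where "t = ln \<bar>S' (h j x)\<bar> - ln \<bar>S' (h j y)\<bar>"
    have t: "t = ln (\<bar>S' (h j x)\<bar> / \<bar>S' (h j y)\<bar>)"
      unfolding t_def using S'pos0[OF j x] S'pos0[OF j y] by (simp add: ln_div)
    have te: "t < \<epsilon>" unfolding t
      by (rule nonlin_bound[OF A hI(2)[OF j x] hI(1)[OF j x] _]) (use hI[OF j y] Mpos apos in auto)
    have dd: "\<bar>h j x - h j y\<bar> * lam ^ m \<le> 1" using dist[OF mj(2) x y] mj by simp
    have lp: "lam ^ m = lam powr (real m)" using lam by (simp add: powr_realpow)
    have lpm: "lam powr (- real m) = 1 / lam ^ m" using lam by (simp add: powr_minus lp divide_inverse)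
    have d: "\<bar>h j x - h j y\<bar> \<le> lam powr (- real m)"
      unfolding lpm using dd lam by (simp add: pos_le_divide_eq)
    have "\<bar>t\<bar> \<le> M * \<bar>h j x - h j y\<bar> powr \<alpha>" unfolding t
      using Hol[rule_format, OF hI(2)[OF j x] hI(1)[OF j x] hI(1)[OF j y]] .
    then have "t \<le> M * \<bar>h j x - h j y\<bar> powr \<alpha>" by linarith
    also have "\<dots> \<le> M * (lam powr (- real m)) powr \<alpha>"
      using d Mpos apos by (intro mult_left_mono powr_mono2) auto
    also have "(lam powr (- real m)) powr \<alpha> = q ^ m"
      unfolding q_def using lam by (simp add: powr_powr powr_power)
    finally have tM: "t \<le> M * q ^ m" .
    have "sqrt (\<epsilon> * M) * sqrt q ^ m = sqrt (\<epsilon> * (M * q ^ m))"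
      by (simp add: real_sqrt_mult real_sqrt_power)
    moreover have "t \<le> sqrt (\<epsilon> * (M * q ^ m))"
    proof (cases "t \<le> 0")
      case True
      have "0 \<le> sqrt (\<epsilon> * (M * q ^ m))" using epos Mpos q by simp
      then show ?thesis using True by linarith
    next
      case False
      then have "t * t \<le> \<epsilon> * (M * q ^ m)" using te tM by (intro mult_mono) auto
      then show ?thesis by (intro real_le_rsqrt) (simp add: power2_eq_square)
    qed
    ultimately show ?thesis unfolding t_def m_def by simp
  qed
  define s where "s = sqrt q"
  have s: "0 \<le> s" "s < 1" unfolding s_def using q by auto
  have bound: "ln (\<bar>Dv u x\<bar> / \<bar>Dv u y\<bar>) \<le> sqrt (\<epsilon> * M) / (1 - s) + \<beta>"
    if x: "x \<in> T" and y: "y \<in> T" for x y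
  proof -
    have "ln (\<bar>Dv u x\<bar> / \<bar>Dv u y\<bar>) = ln \<bar>Dv u x\<bar> - ln \<bar>Dv u y\<bar>"
      using Dpos[OF x] Dpos[OF y] by (simp add: ln_div)
    also have "\<dots> = (\<Sum>j<u. ln \<bar>S' (h j x)\<bar> - ln \<bar>S' (h j y)\<bar>) + (ln \<bar>F' x\<bar> - ln \<bar>F' y\<bar>)"
      unfolding lnD[OF x] lnD[OF y] by (simp add: sum_subtractf)
    also have "\<dots> \<le> (\<Sum>j<u. sqrt (\<epsilon> * M) * s ^ (u - 1 - j)) + \<beta>"
      using trm[OF _ x y] Fbd x y unfolding s_def by (intro add_mono sum_mono) auto
    also have "(\<Sum>j<u. sqrt (\<epsilon> * M) * s ^ (u - 1 - j)) = sqrt (\<epsilon> * M) * (\<Sum>j<u. s ^ (u - 1 - j))"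
      by (simp add: sum_distrib_left)
    also have "\<dots> \<le> sqrt (\<epsilon> * M) * (1 / (1 - s))"
      using epos Mpos by (intro mult_left_mono geo_bound s) auto
    finally show ?thesis by simp
  qed
  show ?thesis
  proof (intro exI[of _ "Dv u"] conjI ballI)
    fix x assume x: "x \<in> T"
    show "((\<lambda>y. (S ^^ u) (circle_map F y)) has_real_derivative Dv u x) (at x within T)"
      using key[of u] x unfolding h_def f_def by auto
    show "Dv u x \<noteq> 0" using Dpos[OF x] by auto
  next
    show "nonlin (Dv u) T \<le> sqrt (\<epsilon> * M) / (1 - sqrt (lam powr - \<alpha>)) + \<beta>"
      unfolding nonlin_def q_def[symmetric] s_def[symmetric]
      using T(2) bound by (intro cSUP_least) auto
  qed
qed



lemma ratio_gt1:
  assumes R: "repeller_setting k a b l1 l2" and j: "j < k"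
  shows "1 < (l2 - l1) / (b j - a j)"
proof -
  have k2: "2 \<le> k" and a0: "l1 \<le> a 0" "0 \<le> a 0" using R unfolding repeller_setting_def by auto
  have Lj: "l1 \<le> a j" "b j \<le> l2" "a j < b j" using I_in_L[OF R j] by auto
  have "b j - a j < l2 - l1"
  proof (cases "j = 0")
    case True
    have "b 0 < a 1" using chain_lt[OF R, of 0 1] k2 by auto
    moreover have "a 1 < b 1" "b 1 \<le> l2" using I_in_L[OF R, of 1] k2 by auto
    ultimately show ?thesis using True a0 by auto
  next
    case False
    have "b 0 < a j" using chain_lt[OF R, of 0 j] False j by auto
    moreover have "a 0 < b 0" using I_in_L[OF R, of 0] k2 by auto
    ultimately show ?thesis using Lj a0 by auto
  qed
  then show ?thesis using Lj by (simp add: less_divide_eq_1_pos)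
qed

theorem lemma2:
  fixes k :: nat and a b :: "nat \<Rightarrow> real" and l1 l2 :: real
  assumes "repeller_setting k a b l1 l2"
  shows "\<forall>\<eta>>0. \<forall>\<alpha>>0. \<forall>M>0. \<exists>\<epsilon>>0. \<forall>S S' F.
     class_A k a b l1 l2 M \<epsilon> \<alpha> S S' \<and> C1_circle_diffeo_lift F \<and>
     is_minimal_set (circle_map F) (survivor_set k a b S) \<longrightarrow>
     (\<exists>m0::nat. \<forall>m T u. m > m0 \<and> is_block k a b l1 l2 S m T \<and>
        return_ok k a b S (circle_map F) T u \<and>
        (\<forall>n. return_ok k a b S (circle_map F) T n \<longrightarrow> n \<le> u) \<longrightarrow>
        (\<exists>g'. (\<forall>x\<in>T. ((\<lambda>y. (S ^^ u) (circle_map F y)) has_real_derivative g' x) (at x within T)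
                  \<and> g' x \<noteq> 0) \<and>
              nonlin g' T < \<eta>))"
proof (intro allI impI)
  note R = assms
  fix \<eta> \<alpha> M :: real
  assume eta: "\<eta> > 0" and apos: "\<alpha> > 0" and Mpos: "M > 0"
  have k2: "2 \<le> k" and l12: "0 \<le> l1" "l2 < 1" using R unfolding repeller_setting_def by auto
  define lam0 where "lam0 = Min ((\<lambda>j. (l2 - l1) / (b j - a j)) ` {..<k})"
  have lam0_le: "lam0 \<le> (l2 - l1) / (b j - a j)" if "j < k" for j
    unfolding lam0_def using that by (intro Min_le) auto
  have lam0_gt: "lam0 > 1" unfolding lam0_def using k2 ratio_gt1[OF R]
  proof (subst Min_gr_iff)
    show "(\<lambda>j. (l2 - l1) / (b j - a j)) ` {..<k} \<noteq> {}" using k2 by (auto simp: lessThan_empty_iff)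
  qed (use ratio_gt1[OF R] in auto)
  define lam where "lam = sqrt lam0"
  have lam: "lam > 1" unfolding lam_def using lam0_gt by simp
  define q where "q = lam powr (-\<alpha>)"
  have q: "0 < q" "q < 1" unfolding q_def using lam apos by (auto intro: powr_less_one)
  define s where "s = sqrt q"
  have s: "0 \<le> s" "s < 1" unfolding s_def using q by auto
  define \<epsilon> where "\<epsilon> = min (ln lam0 / 2) ((\<eta> * (1 - s) / 2)\<^sup>2 / (2 * M))"
  have epos: "\<epsilon> > 0" unfolding \<epsilon>_def using lam0_gt eta s Mpos by auto
  have e1: "\<epsilon> \<le> ln lam0 / 2" unfolding \<epsilon>_def by simp
  have smallsum: "sqrt (\<epsilon> * M) / (1 - s) < \<eta> / 2"
  proof -
    have "\<epsilon> * M \<le> (\<eta> * (1 - s) / 2)\<^sup>2 / (2 * M) * M"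
      unfolding \<epsilon>_def using Mpos by (intro mult_right_mono) auto
    also have "\<dots> = (\<eta> * (1 - s) / 2)\<^sup>2 / 2" using Mpos by simp
    also have "\<dots> < (\<eta> * (1 - s) / 2)\<^sup>2" using eta s by simp
    finally have "sqrt (\<epsilon> * M) < sqrt ((\<eta> * (1 - s) / 2)\<^sup>2)" by (rule real_sqrt_less_mono)
    also have "\<dots> = \<eta> * (1 - s) / 2" using eta s by simp
    finally have "sqrt (\<epsilon> * M) < (\<eta> / 2) * (1 - s)" by simp
    then show ?thesis using s by (simp add: pos_divide_less_eq)
  qed
  show "\<exists>\<epsilon>>0. \<forall>S S' F.
     class_A k a b l1 l2 M \<epsilon> \<alpha> S S' \<and> C1_circle_diffeo_lift F \<and>
     is_minimal_set (circle_map F) (survivor_set k a b S) \<longrightarrow>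
     (\<exists>m0::nat. \<forall>m T u. m > m0 \<and> is_block k a b l1 l2 S m T \<and>
        return_ok k a b S (circle_map F) T u \<and>
        (\<forall>n. return_ok k a b S (circle_map F) T n \<longrightarrow> n \<le> u) \<longrightarrow>
        (\<exists>g'. (\<forall>x\<in>T. ((\<lambda>y. (S ^^ u) (circle_map F y)) has_real_derivative g' x) (at x within T)
                  \<and> g' x \<noteq> 0) \<and>
              nonlin g' T < \<eta>))"
  proof (intro exI[of _ \<epsilon>] conjI epos allI impI)
    fix S S' F
    assume hyp: "class_A k a b l1 l2 M \<epsilon> \<alpha> S S' \<and> C1_circle_diffeo_lift F \<and>
     is_minimal_set (circle_map F) (survivor_set k a b S)"
    then have A: "class_A k a b l1 l2 M \<epsilon> \<alpha> S S'" and C1: "C1_circle_diffeo_lift F" by auto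
    obtain F' where FD: "\<forall>x. (F has_real_derivative F' x) (at x)" and Fc: "continuous_on UNIV F'"
      and F0: "\<forall>x. F' x \<noteq> 0" using C1 unfolding C1_circle_diffeo_lift_def by auto
    have IS: "in_class_S k a b l1 l2 \<alpha> S S'" using A unfolding class_A_def by auto
    have D: "\<forall>j<k. \<forall>x\<in>{a j..b j}. (S has_real_derivative S' x) (at x within {a j..b j})"
      and Im: "\<forall>j<k. S ` {a j..b j} = {l1..l2}"
      using IS unfolding in_class_S_def by auto
    have LB: "\<forall>j<k. \<forall>z\<in>{a j..b j}. lam \<le> \<bar>S' z\<bar>"
      unfolding lam_def using deriv_lower[OF R A _ _ _ lam0_le _ e1] Mpos apos lam0_gt by auto
    have Ex: "\<forall>j<k. \<forall>x\<in>{a j..b j}. \<forall>y\<in>{a j..b j}. lam * \<bar>x - y\<bar> \<le> \<bar>S x - S y\<bar>"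
    proof (intro allI impI ballI)
      fix j x y assume j: "j < k" and x: "x \<in> {a j..b j}" and y: "y \<in> {a j..b j}"
      have Dj: "\<forall>z\<in>{a j..b j}. (S has_real_derivative S' z) (at z within {a j..b j})" using D j by auto
      have Lj: "\<forall>z\<in>{a j..b j}. lam \<le> \<bar>S' z\<bar>" using LB j by auto
      show "lam * \<bar>x - y\<bar> \<le> \<bar>S x - S y\<bar>" using expand_branch[OF Dj Lj _ x y] lam by auto
    qed
    define cl where "cl x = ln \<bar>F' x\<bar>" for x
    have "continuous_on {0..1} cl" unfolding cl_def
      using F0 continuous_on_subset[OF Fc] by (intro continuous_intros) auto
    then have "uniformly_continuous_on {0..1} cl" by (intro compact_uniformly_continuous) auto
    then obtain \<delta> where dpos: "\<delta> > 0"
      and dd: "\<And>x x'. x \<in> {0..1} \<Longrightarrow> x' \<in> {0..1} \<Longrightarrow> dist x' x < \<delta> \<Longrightarrow> dist (cl x') (cl x) < \<eta> / 4"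
      unfolding uniformly_continuous_on_def using eta by (metis divide_pos_pos zero_less_numeral)
    obtain m0 where m0: "(l2 - l1) / \<delta> < lam ^ m0" using real_arch_pow[OF lam] by auto
    show "\<exists>m0::nat. \<forall>m T u. m > m0 \<and> is_block k a b l1 l2 S m T \<and>
        return_ok k a b S (circle_map F) T u \<and>
        (\<forall>n. return_ok k a b S (circle_map F) T n \<longrightarrow> n \<le> u) \<longrightarrow>
        (\<exists>g'. (\<forall>x\<in>T. ((\<lambda>y. (S ^^ u) (circle_map F y)) has_real_derivative g' x) (at x within T)
                  \<and> g' x \<noteq> 0) \<and>
              nonlin g' T < \<eta>)"
    proof (intro exI[of _ m0] allI impI)
      fix m T u
      assume mh: "m0 < m \<and> is_block k a b l1 l2 S m T \<and> return_ok k a b S (circle_map F) T u \<and>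
        (\<forall>n. return_ok k a b S (circle_map F) T n \<longrightarrow> n \<le> u)"
      then obtain js where js: "length js = m" "set js \<subseteq> {..<k}"
        "T = foldr (\<lambda>i A. the_inv_into {a i..b i} S ` A) js {l1..l2}"
        unfolding is_block_def by auto
      have ret: "return_ok k a b S (circle_map F) T u" using mh by auto
      have BP: "T \<subseteq> {l1..l2}" "T \<noteq> {}" "connected T" "\<forall>x\<in>T. \<forall>y\<in>T. \<bar>x - y\<bar> * lam ^ m \<le> l2 - l1"
        using block_props[OF R D Im lam Ex js(2)] js(1) unfolding js(3) by auto
      have Fbd: "\<forall>x\<in>T. \<forall>y\<in>T. ln \<bar>F' x\<bar> - ln \<bar>F' y\<bar> \<le> \<eta> / 4"
      proof (intro ballI)
        fix x y assume x: "x \<in> T" and y: "y \<in> T"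
        have x01: "x \<in> {0..1}" "y \<in> {0..1}" using BP(1) x y l12 by auto
        have lm: "lam ^ m0 \<le> lam ^ m" using mh lam by (intro power_increasing) auto
        have "\<bar>x - y\<bar> * lam ^ m \<le> l2 - l1" using BP(4) x y by auto
        also have "\<dots> < \<delta> * lam ^ m0" using m0 dpos by (simp add: pos_divide_less_eq mult.commute)
        also have "\<dots> \<le> \<delta> * lam ^ m" using lm dpos by simp
        finally have "\<bar>x - y\<bar> < \<delta>" using lam by simp
        then have "dist (cl x) (cl y) < \<eta> / 4" using dd[OF x01(2) x01(1)] by (simp add: dist_real_def abs_minus_commute)
        then show "ln \<bar>F' x\<bar> - ln \<bar>F' y\<bar> \<le> \<eta> / 4" unfolding cl_def dist_real_def by linarith
      qed
      obtain g' where g': "\<forall>x\<in>T. ((\<lambda>y. (S ^^ u) (circle_map F y)) has_real_derivative g' x) (at x within T)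
                  \<and> g' x \<noteq> 0" and gn: "nonlin g' T \<le> sqrt (\<epsilon> * M) / (1 - sqrt (lam powr (-\<alpha>))) + \<eta> / 4"
        using orbit_main[OF R A Mpos apos epos lam LB FD F0 BP(3) BP(2) ret Fbd] by blast
      have "nonlin g' T < \<eta>" using gn smallsum eta unfolding q_def[symmetric] s_def[symmetric] by linarith
      then show "\<exists>g'. (\<forall>x\<in>T. ((\<lambda>y. (S ^^ u) (circle_map F y)) has_real_derivative g' x) (at x within T)
                  \<and> g' x \<noteq> 0) \<and> nonlin g' T < \<eta>" using g' by blast
    qed
  qed
qed


end
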